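(* Let $\mathcal V$ be a finite set, $2\le k\le|\mathcal V|-2$, let $\Gamma\subset\binom{\mathcal V}{k}$ be a code and $G\le{\rm Aut}(\Gamma)\cap{\rm Sym}(\mathcal V)$. If $\Gamma$ is $G$-strongly incidence-transitive, then $\Gamma$ is $G$-incidence-transitive and $\delta(\Gamma)\ge2$.
   Context: The Johnson graph $J(|\mathcal V|,k)$ has vertex set $\binom{\mathcal V}{k}$, the $k$-subsets of $\mathcal V$, two being adjacent iff they meet in $k-1$ points; $d$ is graph distance. A code is a proper non-empty subset $\Gamma\subset\binom{\mathcal V}{k}$; $\delta(\Gamma)$ is the least distance between distinct codewords; the neighbour set $\Gamma_1$ is the set of $k$-subsets not in $\Gamma$ at distance $1$ from some codeword. ${\rm Aut}(\Gamma)$ is the setwise stabiliser of $\Gamma$ in ${\rm Aut}(J(|\mathcal V|,k))$. $\Gamma$ is $G$-incidence-transitive if $G$ is transitive on $\{(\gamma,\gamma_1)\in\Gamma\times\Gamma_1: d(\gamma,\gamma_1)=1\}$. $\Gamma$ is $G$-strongly incidence-transitive if $G$ is transitive on $\Gamma$ and, for $\gamma\in\Gamma$, $G_\gamma$ is transitive on $\gamma\times(\mathcal V\setminus\gamma)$. *)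

theory Defs
  imports "HOL-Algebra.Bij" "HOL-Algebra.Group"
begin

definition ksubsets :: "'a set \<Rightarrow> nat \<Rightarrow> 'a set set" where
  "ksubsets V k = {A. A \<subseteq> V \<and> card A = k}"

definition johnson_adj :: "'a set \<Rightarrow> nat \<Rightarrow> 'a set \<Rightarrow> 'a set \<Rightarrow> bool" where
  "johnson_adj V k A B \<longleftrightarrow> A \<in> ksubsets V k \<and> B \<in> ksubsets V k \<and> A \<noteq> B
      \<and> card (A \<inter> B) = k - 1"

definition johnson_dist :: "'a set \<Rightarrow> nat \<Rightarrow> 'a set \<Rightarrow> 'a set \<Rightarrow> nat" where
  "johnson_dist V k A B = (LEAST n. \<exists>p. length p = Suc n \<and> hd p = A \<and> last p = B
      \<and> (\<forall>i<n. johnson_adj V k (p ! i) (p ! Suc i)))"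

definition is_code :: "'a set \<Rightarrow> nat \<Rightarrow> 'a set set \<Rightarrow> bool" where
  "is_code V k \<Gamma> \<longleftrightarrow> \<Gamma> \<subseteq> ksubsets V k \<and> \<Gamma> \<noteq> {} \<and> \<Gamma> \<noteq> ksubsets V k"

definition min_dist_ge :: "'a set \<Rightarrow> nat \<Rightarrow> 'a set set \<Rightarrow> nat \<Rightarrow> bool" where
  "min_dist_ge V k \<Gamma> d \<longleftrightarrow>
     (\<forall>A\<in>\<Gamma>. \<forall>B\<in>\<Gamma>. A \<noteq> B \<longrightarrow> d \<le> johnson_dist V k A B)"

definition neighbour_set :: "'a set \<Rightarrow> nat \<Rightarrow> 'a set set \<Rightarrow> 'a set set" where
  "neighbour_set V k \<Gamma> = {B \<in> ksubsets V k. B \<notin> \<Gamma> \<and> (\<exists>A\<in>\<Gamma>. johnson_dist V k A B = 1)}"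

definition incidences :: "'a set \<Rightarrow> nat \<Rightarrow> 'a set set \<Rightarrow> ('a set \<times> 'a set) set" where
  "incidences V k \<Gamma> = {(A, B). A \<in> \<Gamma> \<and> B \<in> neighbour_set V k \<Gamma> \<and> johnson_dist V k A B = 1}"

definition stabilises_code :: "('a \<Rightarrow> 'a) set \<Rightarrow> 'a set set \<Rightarrow> bool" where
  "stabilises_code G \<Gamma> \<longleftrightarrow> (\<forall>g\<in>G. (\<lambda>A. g ` A) ` \<Gamma> = \<Gamma>)"

definition incidence_transitive :: "'a set \<Rightarrow> nat \<Rightarrow> ('a \<Rightarrow> 'a) set \<Rightarrow> 'a set set \<Rightarrow> bool" where
  "incidence_transitive V k G \<Gamma> \<longleftrightarrow>
     (\<forall>(A, B)\<in>incidences V k \<Gamma>. \<forall>(A', B')\<in>incidences V k \<Gamma>.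
        \<exists>g\<in>G. g ` A = A' \<and> g ` B = B')"

definition strongly_incidence_transitive :: "'a set \<Rightarrow> ('a \<Rightarrow> 'a) set \<Rightarrow> 'a set set \<Rightarrow> bool" where
  "strongly_incidence_transitive V G \<Gamma> \<longleftrightarrow>
     (\<forall>A\<in>\<Gamma>. \<forall>B\<in>\<Gamma>. \<exists>g\<in>G. g ` A = B) \<and>
     (\<forall>C\<in>\<Gamma>. \<forall>(a, b)\<in>C \<times> (V - C). \<forall>(c, d)\<in>C \<times> (V - C).
        \<exists>g\<in>G. g ` C = C \<and> g a = c \<and> g b = d)"

end

theory Submission
  imports Defs
begin

lemma ks_finite: "finite V \<Longrightarrow> A \<in> ksubsets V k \<Longrightarrow> finite A"
  by (auto simp: ksubsets_def intro: finite_subset)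

lemma adj_split:
  assumes "finite V" "1 \<le> k" "johnson_adj V k A B"
  shows "\<exists>a b. a \<in> A \<and> a \<notin> B \<and> b \<in> B \<and> b \<notin> A \<and> B = insert b (A - {a})"
proof -
  have A: "A \<subseteq> V" "card A = k" and B: "B \<subseteq> V" "card B = k" and ne: "A \<noteq> B"
    and I: "card (A \<inter> B) = k - 1"
    using assms(3) by (auto simp: johnson_adj_def ksubsets_def)
  have fA: "finite A" and fB: "finite B" using A B assms(1) finite_subset by auto
  have "card (A - B) = 1" using card_Diff_subset_Int[of A B] fA A I assms(2)
    by (simp add: Int_commute)
  then obtain a where a: "A - B = {a}" by (auto simp: card_Suc_eq)
  have "card (B - A) = 1" using card_Diff_subset_Int[of B A] fB B I assms(2)
    by (simp add: Int_commute)
  then obtain b where b: "B - A = {b}" by (auto simp: card_Suc_eq)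
  have "B = insert b (A - {a})"
  proof
    show "B \<subseteq> insert b (A - {a})" using a b by blast
    show "insert b (A - {a}) \<subseteq> B" using a b by blast
  qed
  thus ?thesis using a b by blast
qed

lemma swap_adj:
  assumes "finite V" "1 \<le> k" "A \<in> ksubsets V k" "a \<in> A" "b \<in> V" "b \<notin> A"
  shows "johnson_adj V k A (insert b (A - {a}))"
proof -
  have fA: "finite A" using ks_finite assms by blast
  have cA: "card A = k" "A \<subseteq> V" using assms(3) by (auto simp: ksubsets_def)
  have c1: "card (A - {a}) = k - 1" using cA fA assms(4) by simp
  have c2: "card (insert b (A - {a})) = k" using c1 fA assms(6) assms(2) by simp
  have i: "A \<inter> insert b (A - {a}) = A - {a}" using assms(6) by blast
  have ne: "A \<noteq> insert b (A - {a})" using assms(4,6) by blast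
  show ?thesis unfolding johnson_adj_def ksubsets_def
    using c1 c2 i ne cA assms(5) by auto
qed

lemma closure_lemma:
  assumes "finite V" "1 \<le> k"
    and cl: "\<And>X Y. X \<in> S \<Longrightarrow> johnson_adj V k X Y \<Longrightarrow> Y \<in> S"
  shows "X \<in> S \<Longrightarrow> X \<in> ksubsets V k \<Longrightarrow> Y \<in> ksubsets V k \<Longrightarrow> Y \<in> S"
proof (induction "card (Y - X)" arbitrary: X)
  case 0
  have fY: "finite Y" using ks_finite assms 0 by blast
  have fX: "finite X" using ks_finite assms 0 by blast
  have "Y \<subseteq> X" using 0 fY by auto
  moreover have "card Y = card X" using 0 by (simp add: ksubsets_def)
  ultimately have "Y = X" using fX card_subset_eq by blast
  thus ?case using 0 by simp
next
  case (Suc n)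
  have fY: "finite Y" using ks_finite assms Suc by blast
  have fX: "finite X" using ks_finite assms Suc by blast
  obtain y where y: "y \<in> Y" "y \<notin> X" using Suc(2) by (metis Diff_iff card.empty ex_in_conv nat.simps(3))
  have cXY: "card X = card Y" using Suc by (simp add: ksubsets_def)
  have "card (X - Y) = card (Y - X)"
    using card_Diff_subset_Int[of X Y] card_Diff_subset_Int[of Y X] fX fY cXY
    by (simp add: Int_commute)
  hence "X - Y \<noteq> {}" using Suc(2) by (metis Diff_eq_empty_iff card.empty nat.simps(3))
  then obtain x where x: "x \<in> X" "x \<notin> Y" by blast
  define X' where "X' = insert y (X - {x})"
  have yV: "y \<in> V" using y Suc(5) by (auto simp: ksubsets_def)
  have adj: "johnson_adj V k X X'" unfolding X'_def
    using swap_adj[OF assms(1,2) Suc(4) x(1) yV y(2)] .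
  hence X'S: "X' \<in> S" using cl Suc(3) by blast
  have X'k: "X' \<in> ksubsets V k" using adj by (simp add: johnson_adj_def)
  have "Y - X' = (Y - X) - {y}" unfolding X'_def using x by blast
  hence "card (Y - X') = n" using Suc(2) y fY by simp
  thus ?case using Suc(1)[of X'] X'S X'k Suc(5) by simp
qed

lemma path_exists:
  assumes "finite V" "1 \<le> k" "X \<in> ksubsets V k" "Y \<in> ksubsets V k"
  shows "\<exists>n p. length p = Suc n \<and> hd p = X \<and> last p = Y
      \<and> (\<forall>i<n. johnson_adj V k (p ! i) (p ! Suc i))"
proof -
  let ?S = "{Y. \<exists>n p. length p = Suc n \<and> hd p = X \<and> last p = Y
      \<and> (\<forall>i<n. johnson_adj V k (p ! i) (p ! Suc i))}"
  have XS: "X \<in> ?S" by (rule CollectI, rule exI[of _ 0], rule exI[of _ "[X]"]) simp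
  have cl: "Z \<in> ?S" if WS: "W \<in> ?S" and WZ: "johnson_adj V k W Z" for W Z
  proof -
    obtain n p where p: "length p = Suc n" "hd p = X" "last p = W"
      "\<forall>i<n. johnson_adj V k (p ! i) (p ! Suc i)" using WS by blast
    have pn: "p ! n = W" using p(1,3) by (metis diff_Suc_1 last_conv_nth list.size(3) nat.simps(3))
    have "\<forall>i<Suc n. johnson_adj V k ((p @ [Z]) ! i) ((p @ [Z]) ! Suc i)"
    proof (intro allI impI)
      fix i assume i: "i < Suc n"
      show "johnson_adj V k ((p @ [Z]) ! i) ((p @ [Z]) ! Suc i)"
      proof (cases "i = n")
        case True thus ?thesis using pn p(1) WZ by (simp add: nth_append)
      next
        case False thus ?thesis using i p(1,4) by (simp add: nth_append)
      qed
    qed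
    moreover have "hd (p @ [Z]) = X" using p(1,2) by (cases p) auto
    ultimately show ?thesis using p(1) by (intro CollectI exI[of _ "Suc n"] exI[of _ "p @ [Z]"]) simp
  qed
  have "Y \<in> ?S" using closure_lemma[of V k ?S, OF assms(1,2) _ XS assms(3,4)] cl by blast
  thus ?thesis by blast
qed

lemma dist_prop:
  assumes "finite V" "1 \<le> k" "X \<in> ksubsets V k" "Y \<in> ksubsets V k"
  shows "\<exists>p. length p = Suc (johnson_dist V k X Y) \<and> hd p = X \<and> last p = Y
      \<and> (\<forall>i<johnson_dist V k X Y. johnson_adj V k (p ! i) (p ! Suc i))"
  unfolding johnson_dist_def
  using LeastI_ex[OF path_exists[OF assms]] by simp

lemma dist1_adj:
  assumes "finite V" "1 \<le> k" "X \<in> ksubsets V k" "Y \<in> ksubsets V k"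
    and "johnson_dist V k X Y = 1"
  shows "johnson_adj V k X Y"
proof -
  obtain p where p0: "length p = Suc 1" "hd p = X" "last p = Y"
      "\<forall>i<1. johnson_adj V k (p ! i) (p ! Suc i)"
    using dist_prop[OF assms(1-4)] assms(5) by metis
  have p: "length p = 2" "hd p = X" "last p = Y" "johnson_adj V k (p!0) (p!1)"
    using p0 by auto
  have "p ! 0 = X" using p(1,2) by (cases p) auto
  moreover have "p ! 1 = Y" using p(1,3) by (metis One_nat_def diff_Suc_1 last_conv_nth list.size(3) numeral_2_eq_2 zero_neq_numeral)
  ultimately show ?thesis using p(4) by simp
qed

lemma dist_ge2:
  assumes "finite V" "1 \<le> k" "X \<in> ksubsets V k" "Y \<in> ksubsets V k"
    and "X \<noteq> Y" "\<not> johnson_adj V k X Y"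
  shows "2 \<le> johnson_dist V k X Y"
proof (rule ccontr)
  assume "\<not> 2 \<le> johnson_dist V k X Y"
  hence "johnson_dist V k X Y = 0 \<or> johnson_dist V k X Y = 1" by auto
  thus False
  proof
    assume h: "johnson_dist V k X Y = 0"
    obtain p where p: "length p = 1" "hd p = X" "last p = Y"
      using dist_prop[OF assms(1-4)] h by auto
    then obtain z where "p = [z]" by (cases p) auto
    thus False using p assms(5) by simp
  next
    assume "johnson_dist V k X Y = 1"
    thus False using dist1_adj[OF assms(1-4)] assms(6) by blast
  qed
qed

lemma img_swap:
  assumes "inj_on g V" "A \<subseteq> V" "a \<in> A" "b \<in> V" "b \<notin> A"
  shows "g ` (insert b (A - {a})) = insert (g b) (g ` A - {g a})"
proof -
  have "g ` (A - {a}) = g ` A - g ` {a}"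
    using assms by (intro inj_on_image_set_diff[OF assms(1)]) auto
  thus ?thesis by simp
qed

lemma sit1:
  assumes "strongly_incidence_transitive V G \<Gamma>" "A \<in> \<Gamma>" "B \<in> \<Gamma>"
  shows "\<exists>g\<in>G. g ` A = B"
proof -
  have "\<forall>A\<in>\<Gamma>. \<forall>B\<in>\<Gamma>. \<exists>g\<in>G. g ` A = B"
    using assms(1) unfolding strongly_incidence_transitive_def by (rule conjunct1)
  thus ?thesis using assms(2,3) by simp
qed

lemma sit2:
  assumes "strongly_incidence_transitive V G \<Gamma>" "C \<in> \<Gamma>"
    "a \<in> C" "b \<in> V" "b \<notin> C" "c \<in> C" "d \<in> V" "d \<notin> C"
  shows "\<exists>g\<in>G. g ` C = C \<and> g a = c \<and> g b = d"
proof -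
  have "\<forall>(a, b)\<in>C \<times> (V - C). \<forall>(c, d)\<in>C \<times> (V - C). \<exists>g\<in>G. g ` C = C \<and> g a = c \<and> g b = d"
  proof -
    have "\<forall>C\<in>\<Gamma>. \<forall>(a, b)\<in>C \<times> (V - C). \<forall>(c, d)\<in>C \<times> (V - C).
        \<exists>g\<in>G. g ` C = C \<and> g a = c \<and> g b = d"
      using assms(1) unfolding strongly_incidence_transitive_def by (rule conjunct2)
    thus ?thesis using assms(2) by (rule bspec)
  qed
  hence "\<forall>(c, d)\<in>C \<times> (V - C). \<exists>g\<in>G. g ` C = C \<and> g a = c \<and> g b = d"
    using assms(3-5) by (drule_tac x="(a,b)" in bspec) auto
  hence "\<exists>g\<in>G. g ` C = C \<and> g a = c \<and> g b = d"
    using assms(6-8) by (drule_tac x="(c,d)" in bspec) auto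
  thus ?thesis .
qed

lemma transport:
  assumes fV: "finite V" and k1: "1 \<le> k"
    and sg: "subgroup G (BijGroup V)"
    and st: "stabilises_code G \<Gamma>"
    and sit: "strongly_incidence_transitive V G \<Gamma>"
    and codeS: "\<Gamma> \<subseteq> ksubsets V k"
    and A: "A \<in> \<Gamma>" and A': "A' \<in> \<Gamma>"
    and adj: "johnson_adj V k A B" and adj': "johnson_adj V k A' B'"
  shows "\<exists>f\<in>G. f ` A = A' \<and> f ` B = B'"
proof -
  have GB: "\<And>g. g \<in> G \<Longrightarrow> g \<in> Bij V"
    using subgroup.subset[OF sg] by (auto simp: BijGroup_def)
  have inj: "\<And>g. g \<in> G \<Longrightarrow> inj_on g V" and img: "\<And>g. g \<in> G \<Longrightarrow> g ` V = V"
    using GB by (auto simp: Bij_def bij_betw_def)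
  obtain a b where ab: "a \<in> A" "a \<notin> B" "b \<in> B" "b \<notin> A" "B = insert b (A - {a})"
    using adj_split[OF fV k1 adj] by blast
  obtain a' b' where ab': "a' \<in> A'" "a' \<notin> B'" "b' \<in> B'" "b' \<notin> A'" "B' = insert b' (A' - {a'})"
    using adj_split[OF fV k1 adj'] by blast
  have AV: "A \<subseteq> V" "B \<subseteq> V" "A' \<subseteq> V" "B' \<subseteq> V"
    using adj adj' by (auto simp: johnson_adj_def ksubsets_def)
  obtain h where h: "h \<in> G" "h ` A = A'" using sit1[OF sit A A'] by blast
  have ha: "h a \<in> A'" using h ab by blast
  have bV: "b \<in> V" using ab AV by blast
  have hbV: "h b \<in> V" using img[OF h(1)] bV by blast
  have hbA: "h b \<notin> A'"
  proof
    assume "h b \<in> A'"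
    then obtain x where x: "x \<in> A" "h x = h b" by (metis h(2) imageE)
    have "x \<in> V" using x(1) AV(1) by blast
    hence "x = b" using inj_onD[OF inj[OF h(1)] x(2) _ bV] by blast
    thus False using x(1) ab(4) by simp
  qed
  have b'V: "b' \<in> V" using ab' AV by blast
  obtain g where g: "g \<in> G" "g ` A' = A'" "g (h a) = a'" "g (h b) = b'"
    using sit2[OF sit A' ha hbV hbA ab'(1) b'V ab'(4)] by blast
  define f where "f = compose V g h"
  have fG: "f \<in> G"
  proof -
    have "g \<otimes>\<^bsub>BijGroup V\<^esub> h \<in> G" using subgroup.m_closed[OF sg g(1) h(1)] .
    moreover have "g \<otimes>\<^bsub>BijGroup V\<^esub> h = f" using GB[OF g(1)] GB[OF h(1)]
      by (simp add: BijGroup_def f_def)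
    ultimately show ?thesis by simp
  qed
  have fimg: "\<And>X. X \<subseteq> V \<Longrightarrow> f ` X = g ` h ` X"
    unfolding f_def compose_def by (auto simp: image_def subset_iff)
  have "f ` A = A'" using fimg[OF AV(1)] h g by simp
  moreover have "f ` B = B'"
  proof -
    have "h ` B = insert (h b) (A' - {h a})"
      using img_swap[OF inj[OF h(1)] AV(1) ab(1) bV ab(4)] ab(5) h(2) by simp
    moreover have "g ` insert (h b) (A' - {h a}) = insert b' (A' - {a'})"
      using img_swap[OF inj[OF g(1)] AV(3) ha hbV hbA] g by simp
    ultimately show ?thesis using fimg[OF AV(2)] ab'(5) by simp
  qed
  ultimately show ?thesis using fG by blast
qed

theorem lemma2p1:
  fixes V :: "'a set" and k :: nat and \<Gamma> :: "'a set set" and G :: "('a \<Rightarrow> 'a) set"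
  assumes "finite V"
    and "2 \<le> k" and "k + 2 \<le> card V"
    and "is_code V k \<Gamma>"
    and "subgroup G (BijGroup V)"
    and "stabilises_code G \<Gamma>"
    and "strongly_incidence_transitive V G \<Gamma>"
  shows "incidence_transitive V k G \<Gamma> \<and> min_dist_ge V k \<Gamma> 2"
proof
  have k1: "1 \<le> k" using assms(2) by simp
  have codeS: "\<Gamma> \<subseteq> ksubsets V k" using assms(4) by (simp add: is_code_def)
  note tr = transport[OF assms(1) k1 assms(5,6,7) codeS]
  show "incidence_transitive V k G \<Gamma>"
    unfolding incidence_transitive_def
  proof (intro ballI, clarify)
    fix A B A' B'
    assume i1: "(A, B) \<in> incidences V k \<Gamma>" and i2: "(A', B') \<in> incidences V k \<Gamma>"
    have "A \<in> \<Gamma>" "B \<in> ksubsets V k" "johnson_dist V k A B = 1"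
      using i1 by (auto simp: incidences_def neighbour_set_def)
    hence adj: "johnson_adj V k A B" "A \<in> \<Gamma>"
      using dist1_adj[OF assms(1) k1] codeS by blast+
    have "A' \<in> \<Gamma>" "B' \<in> ksubsets V k" "johnson_dist V k A' B' = 1"
      using i2 by (auto simp: incidences_def neighbour_set_def)
    hence adj': "johnson_adj V k A' B'" "A' \<in> \<Gamma>"
      using dist1_adj[OF assms(1) k1] codeS by blast+
    show "\<exists>g\<in>G. g ` A = A' \<and> g ` B = B'" using tr[OF adj(2) adj'(2) adj(1) adj'(1)] .
  qed
  show "min_dist_ge V k \<Gamma> 2"
    unfolding min_dist_ge_def
  proof (intro ballI impI)
    fix A0 B0 assume A0: "A0 \<in> \<Gamma>" and B0: "B0 \<in> \<Gamma>" and ne: "A0 \<noteq> B0"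
    have nadj: "\<not> johnson_adj V k A0 B0"
    proof
      assume adj0: "johnson_adj V k A0 B0"
      have cl: "Y \<in> \<Gamma>" if XG: "X \<in> \<Gamma>" and XY: "johnson_adj V k X Y" for X Y
      proof -
        obtain f where f: "f \<in> G" "f ` A0 = X" "f ` B0 = Y" using tr[OF A0 XG adj0 XY] by blast
        have "(\<lambda>A. f ` A) ` \<Gamma> = \<Gamma>" using assms(6) f(1) by (simp add: stabilises_code_def)
        thus ?thesis using f(3) B0 by blast
      qed
      have "ksubsets V k \<subseteq> \<Gamma>"
        using closure_lemma[OF assms(1) k1, of \<Gamma>] cl A0 codeS by blast
      thus False using assms(4) codeS by (simp add: is_code_def)
    qed
    show "2 \<le> johnson_dist V k A0 B0"
      using dist_ge2[OF assms(1) k1 _ _ ne nadj] A0 B0 codeS by blast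
  qed
qed

end
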